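(* Let $G$ be a non-chordal bridged graph of diameter two, and let $C$ be an induced cycle of length $k\ge 6$ in $G$ of minimum length among all induced cycles of length greater than three. Then there exists a vertex $x\notin C$ adjacent to every vertex of $C$, so that $C\cup\{x\}$ induces a $k$-wheel.
   Context: $G$ is bridged if it contains no isometric cycle (a cycle whose distances equal distances in $G$) of length greater than three; in particular a bridged graph has no induced cycles of length 4 or 5. A graph is chordal if it has no induced cycle of length greater than three. A $k$-wheel is a $k$-cycle together with one extra vertex adjacent to all vertices of the cycle. *)

theory Defs
  imports Main
begin

definition graph :: "'a set \<Rightarrow> ('a \<Rightarrow> 'a \<Rightarrow> bool) \<Rightarrow> bool" where
  "graph V E \<longleftrightarrow> (\<forall>u v. E u v \<longrightarrow> u \<in> V \<and> v \<in> V \<and> u \<noteq> v \<and> E v u)"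

definition walk_len :: "'a set \<Rightarrow> ('a \<Rightarrow> 'a \<Rightarrow> bool) \<Rightarrow> nat \<Rightarrow> 'a \<Rightarrow> 'a \<Rightarrow> bool" where
  "walk_len V E n u v \<longleftrightarrow> (\<exists>p. length p = Suc n \<and> set p \<subseteq> V \<and> p ! 0 = u \<and> p ! n = v
      \<and> (\<forall>i<n. E (p ! i) (p ! Suc i)))"

definition connected_graph :: "'a set \<Rightarrow> ('a \<Rightarrow> 'a \<Rightarrow> bool) \<Rightarrow> bool" where
  "connected_graph V E \<longleftrightarrow> (\<forall>u\<in>V. \<forall>v\<in>V. \<exists>n. walk_len V E n u v)"

text \<open>Graph distance (meaningful for connected graphs).\<close>
definition gdist :: "'a set \<Rightarrow> ('a \<Rightarrow> 'a \<Rightarrow> bool) \<Rightarrow> 'a \<Rightarrow> 'a \<Rightarrow> nat" where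
  "gdist V E u v = (LEAST n. walk_len V E n u v)"

definition diameter_two :: "'a set \<Rightarrow> ('a \<Rightarrow> 'a \<Rightarrow> bool) \<Rightarrow> bool" where
  "diameter_two V E \<longleftrightarrow> connected_graph V E
     \<and> (\<forall>u\<in>V. \<forall>v\<in>V. gdist V E u v \<le> 2)
     \<and> (\<exists>u\<in>V. \<exists>v\<in>V. gdist V E u v = 2)"

definition is_cycle :: "'a set \<Rightarrow> ('a \<Rightarrow> 'a \<Rightarrow> bool) \<Rightarrow> 'a list \<Rightarrow> bool" where
  "is_cycle V E cs \<longleftrightarrow> distinct cs \<and> length cs \<ge> 3 \<and> set cs \<subseteq> V
     \<and> (\<forall>i<length cs. E (cs ! i) (cs ! ((i + 1) mod length cs)))"

definition induced_cycle :: "'a set \<Rightarrow> ('a \<Rightarrow> 'a \<Rightarrow> bool) \<Rightarrow> 'a list \<Rightarrow> bool" where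
  "induced_cycle V E cs \<longleftrightarrow> is_cycle V E cs
     \<and> (\<forall>i<length cs. \<forall>j<length cs. E (cs ! i) (cs ! j) \<longrightarrow>
          j = (i + 1) mod length cs \<or> i = (j + 1) mod length cs)"

definition cyc_dist :: "nat \<Rightarrow> nat \<Rightarrow> nat \<Rightarrow> nat" where
  "cyc_dist k i j = (let d = (if i \<le> j then j - i else i - j) in min d (k - d))"

definition isometric_cycle :: "'a set \<Rightarrow> ('a \<Rightarrow> 'a \<Rightarrow> bool) \<Rightarrow> 'a list \<Rightarrow> bool" where
  "isometric_cycle V E cs \<longleftrightarrow> is_cycle V E cs
     \<and> (\<forall>i<length cs. \<forall>j<length cs. gdist V E (cs ! i) (cs ! j) = cyc_dist (length cs) i j)"

definition bridged :: "'a set \<Rightarrow> ('a \<Rightarrow> 'a \<Rightarrow> bool) \<Rightarrow> bool" where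
  "bridged V E \<longleftrightarrow> (\<forall>cs. isometric_cycle V E cs \<longrightarrow> length cs \<le> 3)"

definition chordal :: "'a set \<Rightarrow> ('a \<Rightarrow> 'a \<Rightarrow> bool) \<Rightarrow> bool" where
  "chordal V E \<longleftrightarrow> (\<forall>cs. induced_cycle V E cs \<longrightarrow> length cs \<le> 3)"

end

theory Submission
  imports Defs
begin

lemma suc_mod: "j < (k::nat) \<Longrightarrow> (j + 1) mod k = (if j + 1 = k then 0 else j + 1)"
  by auto

lemma rot_induced:
  assumes "induced_cycle V E cs" shows "induced_cycle V E (rotate r cs)"
proof -
  let ?k = "length cs" let ?D = "rotate r cs"
  have c: "distinct cs" "?k \<ge> 3" "set cs \<subseteq> V"
    "\<forall>i<?k. E (cs ! i) (cs ! ((i + 1) mod ?k))"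
    "\<forall>i<?k. \<forall>j<?k. E (cs ! i) (cs ! j) \<longrightarrow> j = (i + 1) mod ?k \<or> i = (j + 1) mod ?k"
    using assms unfolding induced_cycle_def is_cycle_def by auto
  have kpos: "?k > 0" using c by auto
  have nth: "\<And>i. i < ?k \<Longrightarrow> ?D ! i = cs ! ((r + i) mod ?k)" by (simp add: nth_rotate)
  have succ: "\<And>i. (r + (i+1) mod ?k) mod ?k = ((r+i) mod ?k + 1) mod ?k"
    by (simp add: mod_add_right_eq mod_Suc_eq)
  have dD: "distinct ?D" using c by simp
  have cyc: "\<forall>i<?k. E (?D ! i) (?D ! ((i + 1) mod ?k))"
  proof (intro allI impI)
    fix i assume i: "i < ?k"
    have "(i+1) mod ?k < ?k" using kpos by simp
    hence "?D ! ((i + 1) mod ?k) = cs ! (((r+i) mod ?k + 1) mod ?k)" using nth succ by metis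
    moreover have "(r+i) mod ?k < ?k" using kpos by simp
    ultimately show "E (?D ! i) (?D ! ((i + 1) mod ?k))" using c(4) nth[OF i] by simp
  qed
  have ind: "\<forall>i<?k. \<forall>j<?k. E (?D ! i) (?D ! j) \<longrightarrow> j = (i + 1) mod ?k \<or> i = (j + 1) mod ?k"
  proof (intro allI impI)
    fix i j assume i: "i < ?k" and j: "j < ?k" and e: "E (?D ! i) (?D ! j)"
    have a: "(r+i) mod ?k < ?k" "(r+j) mod ?k < ?k" using kpos by auto
    have i1: "(i+1) mod ?k < ?k" "(j+1) mod ?k < ?k" using kpos by auto
    from e have "E (cs ! ((r+i) mod ?k)) (cs ! ((r+j) mod ?k))" using nth i j by simp
    hence "(r+j) mod ?k = ((r+i) mod ?k + 1) mod ?k \<or> (r+i) mod ?k = ((r+j) mod ?k + 1) mod ?k"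
      using c(5) a by blast
    thus "j = (i + 1) mod ?k \<or> i = (j + 1) mod ?k"
    proof
      assume h: "(r+j) mod ?k = ((r+i) mod ?k + 1) mod ?k"
      have "?D ! j = ?D ! ((i+1) mod ?k)" using nth[OF j] nth[OF i1(1)] h succ by metis
      thus ?thesis using dD j i1 by (simp add: nth_eq_iff_index_eq)
    next
      assume h: "(r+i) mod ?k = ((r+j) mod ?k + 1) mod ?k"
      have "?D ! i = ?D ! ((j+1) mod ?k)" using nth[OF i] nth[OF i1(2)] h succ by metis
      thus ?thesis using dD i i1 by (simp add: nth_eq_iff_index_eq)
    qed
  qed
  show ?thesis unfolding induced_cycle_def is_cycle_def using c dD cyc ind by simp
qed


lemma gap_cycle:
  assumes ic: "induced_cycle V E D" and g: "graph V E" and xV: "x \<in> V" and xn: "x \<notin> set D"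
    and m2: "2 \<le> m" and mk: "m + 1 < length D"
    and e0: "E x (D!0)" and em: "E x (D!m)" and none: "\<forall>i. 0<i \<and> i<m \<longrightarrow> \<not> E x (D!i)"
  shows "induced_cycle V E (x # take (m+1) D)"
proof -
  let ?k = "length D" let ?L = "x # take (m+1) D"
  have c: "distinct D" "?k \<ge> 3" "set D \<subseteq> V"
    "\<forall>i<?k. E (D ! i) (D ! ((i + 1) mod ?k))"
    "\<forall>i<?k. \<forall>j<?k. E (D ! i) (D ! j) \<longrightarrow> j = (i + 1) mod ?k \<or> i = (j + 1) mod ?k"
    using ic unfolding induced_cycle_def is_cycle_def by auto
  have sym: "\<And>u v. E u v \<Longrightarrow> E v u" and irr: "\<And>u. \<not> E u u"
    using g unfolding graph_def by blast+
  have len: "length ?L = m + 2" using mk by simp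
  have L0: "?L ! 0 = x" by simp
  have LS: "\<And>t. t \<le> m \<Longrightarrow> ?L ! Suc t = D ! t" using mk by simp
  have Dsucc: "\<And>t. t < m \<Longrightarrow> E (D ! t) (D ! Suc t)"
  proof -
    fix t assume "t < m"
    hence "t < ?k" "(t+1) mod ?k = Suc t" using mk by auto
    thus "E (D ! t) (D ! Suc t)" using c(4) by metis
  qed
  have dist: "distinct ?L" using c(1) xn by (auto dest: in_set_takeD)
  have setL: "set ?L \<subseteq> V" using c(3) xV by (auto dest: in_set_takeD)
  have cyc: "\<forall>i<m+2. E (?L ! i) (?L ! ((i + 1) mod (m+2)))"
  proof (intro allI impI)
    fix i assume i: "i < m+2"
    show "E (?L ! i) (?L ! ((i + 1) mod (m+2)))"
    proof (cases i)
      case 0 thus ?thesis using e0 LS[of 0] by simp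
    next
      case (Suc t)
      show ?thesis
      proof (cases "t = m")
        case True
        hence "(i+1) mod (m+2) = 0" using Suc by simp
        thus ?thesis using Suc True LS[of m] sym[OF em] by simp
      next
        case False
        hence "t < m" "(i+1) mod (m+2) = Suc (Suc t)" using Suc i by auto
        thus ?thesis using Suc LS[of t] LS[of "Suc t"] Dsucc[of t] by simp
      qed
    qed
  qed
  have ind: "\<forall>i<m+2. \<forall>j<m+2. E (?L ! i) (?L ! j) \<longrightarrow> j = (i + 1) mod (m+2) \<or> i = (j + 1) mod (m+2)"
  proof (intro allI impI)
    fix i j assume i: "i < m+2" and j: "j < m+2" and e: "E (?L ! i) (?L ! j)"
    have xside: "\<And>t. t \<le> m \<Longrightarrow> E x (D ! t) \<Longrightarrow> t = 0 \<or> t = m" using none by fastforce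
    show "j = (i + 1) mod (m+2) \<or> i = (j + 1) mod (m+2)"
    proof (cases i)
      case 0
      show ?thesis
      proof (cases j)
        case 0 thus ?thesis using e \<open>i = 0\<close> irr by simp
      next
        case (Suc t)
        hence "t \<le> m" using j by simp
        hence "E x (D ! t)" using e 0 Suc LS by simp
        hence "t = 0 \<or> t = m" using xside \<open>t \<le> m\<close> by blast
        thus ?thesis using 0 Suc by auto
      qed
    next
      case (Suc s)
      hence s: "s \<le> m" using i by simp
      show ?thesis
      proof (cases j)
        case 0
        hence "E x (D ! s)" using e Suc LS[OF s] sym by simp
        hence "s = 0 \<or> s = m" using xside s by blast
        thus ?thesis using 0 Suc by auto
      next
        case (Suc t)
        hence t: "t \<le> m" using j by simp
        have "E (D ! s) (D ! t)" using e \<open>i = Suc s\<close> Suc LS s t by simp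
        moreover have "s < ?k" "t < ?k" using s t mk by auto
        ultimately have "t = (s + 1) mod ?k \<or> s = (t + 1) mod ?k" using c(5) by blast
        moreover have "(s + 1) mod ?k = s + 1" "(t + 1) mod ?k = t + 1" using s t mk by auto
        ultimately have "t = s + 1 \<or> s = t + 1" by simp
        thus ?thesis using \<open>i = Suc s\<close> Suc s t by auto
      qed
    qed
  qed
  show ?thesis unfolding induced_cycle_def is_cycle_def using len dist setL cyc ind m2
    by (simp del: length_take)
qed


lemma mod2: "(a::nat) < 2*k \<Longrightarrow> a = a mod k \<or> a = a mod k + k"
  by (cases "a < k") (auto simp: le_mod_geq)

theorem mainTheorem13:
  fixes V :: "'a set" and E :: "'a \<Rightarrow> 'a \<Rightarrow> bool" and C :: "'a list" and k :: nat
  assumes "graph V E"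
    and "bridged V E"
    and "\<not> chordal V E"
    and "diameter_two V E"
    and "induced_cycle V E C"
    and "length C = k" and "k \<ge> 6"
    and "\<forall>C'. induced_cycle V E C' \<and> length C' > 3 \<longrightarrow> k \<le> length C'"
  shows "\<exists>x\<in>V. x \<notin> set C \<and> (\<forall>v\<in>set C. E x v)"
proof -
  note g = assms(1) and ic = assms(5) and kC = assms(6) and k6 = assms(7) and minc = assms(8)
  have c: "distinct C" "set C \<subseteq> V"
    "\<forall>i<k. E (C ! i) (C ! ((i + 1) mod k))"
    "\<forall>i<k. \<forall>j<k. E (C ! i) (C ! j) \<longrightarrow> j = (i + 1) mod k \<or> i = (j + 1) mod k"
    using ic kC unfolding induced_cycle_def is_cycle_def by auto
  have sym: "\<And>u v. E u v \<Longrightarrow> E v u" and irr: "\<And>u. \<not> E u u"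
    using g unfolding graph_def by blast+
  have idx: "\<And>a b. a < k \<Longrightarrow> b < k \<Longrightarrow> C ! a = C ! b \<Longrightarrow> a = b"
    using c(1) kC by (simp add: nth_eq_iff_index_eq)
  have m01: "(0+1) mod k = 1" "(3+1) mod k = 4" using k6 by auto
  let ?u = "C ! 0" let ?v = "C ! 3"
  have uC: "?u \<in> set C" "?v \<in> set C" using kC k6 by (auto intro!: nth_mem)
  have uV: "?u \<in> V" "?v \<in> V" using c(2) uC by auto
  have uv: "?u \<noteq> ?v"
  proof
    assume "?u = ?v"
    hence "(0::nat) = 3" using idx[of 0 3] k6 by simp
    thus False by simp
  qed
  have nuv: "\<not> E ?u ?v"
  proof
    assume "E ?u ?v"
    moreover have "(0::nat) < k" "(3::nat) < k" using k6 by auto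
    ultimately have "3 = (0 + 1) mod k \<or> 0 = (3 + 1) mod k" using c(4) by blast
    thus False using m01 by simp
  qed
  have d2: "diameter_two V E" by fact
  then obtain n where w: "walk_len V E n ?u ?v" and n2: "n \<le> 2"
  proof -
    have "\<exists>n. walk_len V E n ?u ?v" using d2 uV unfolding diameter_two_def connected_graph_def by blast
    hence "walk_len V E (gdist V E ?u ?v) ?u ?v" unfolding gdist_def by (rule LeastI_ex)
    moreover have "gdist V E ?u ?v \<le> 2" using d2 uV unfolding diameter_two_def by blast
    ultimately show ?thesis using that by blast
  qed
  then obtain p where p: "length p = Suc n" "set p \<subseteq> V" "p ! 0 = ?u" "p ! n = ?v"
    "\<forall>i<n. E (p ! i) (p ! Suc i)" unfolding walk_len_def by blast
  have "n = 2"
  proof -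
    have "n \<noteq> 0" using p(3,4) uv by (cases n) auto
    moreover have "n \<noteq> 1" using p(3,4,5) nuv by (metis One_nat_def lessI)
    ultimately show ?thesis using n2 by auto
  qed
  define x where "x = p ! 1"
  have l1: "1 < length p" using p(1) \<open>n = 2\<close> by simp
  have xV: "x \<in> V" using nth_mem[OF l1] p(2) unfolding x_def by blast
  have e01: "E (p ! 0) (p ! 1)" using p(5) \<open>n = 2\<close> by simp
  have e12: "E (p ! 1) (p ! 2)" using p(5) \<open>n = 2\<close> by (simp add: numeral_2_eq_2)
  have xu: "E x ?u" using sym[OF e01] p(3) unfolding x_def by simp
  have xv: "E x ?v" using e12 p(4) \<open>n = 2\<close> unfolding x_def by simp
  have xn: "x \<notin> set C"
  proof
    assume "x \<in> set C"
    then obtain j where j: "j < k" "C ! j = x" using kC by (auto simp: in_set_conv_nth)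
    have a: "0 = (j + 1) mod k \<or> j = 1" using c(4) j xu k6 m01 by force
    have "3 < k" using k6 by simp
    hence "3 = (j + 1) mod k \<or> j = (3 + 1) mod k" using c(4) j xv by blast
    hence b: "3 = (j + 1) mod k \<or> j = 4" using m01 by simp
    show False using a b suc_mod[OF j(1)] k6 by (auto split: if_splits)
  qed
  have "\<forall>w\<in>set C. E x w"
  proof (rule ccontr)
    assume "\<not> (\<forall>w\<in>set C. E x w)"
    then obtain j where j: "j < k" "\<not> E x (C ! j)" using kC by (auto simp: in_set_conv_nth)
    define S where "S = {i. i \<le> j \<and> E x (C ! i)}"
    have fS: "finite S" unfolding S_def by simp
    have S0: "0 \<in> S" unfolding S_def using xu by simp
    define i0 where "i0 = Max S"
    have i0S: "i0 \<in> S" using fS S0 unfolding i0_def by (intro Max_in) auto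
    have i0j: "i0 < j" using i0S j unfolding S_def by (cases "i0 = j") auto
    have ni1: "\<not> E x (C ! (i0 + 1))"
    proof
      assume "E x (C ! (i0 + 1))"
      hence "i0 + 1 \<in> S" using i0j unfolding S_def by simp
      hence "i0 + 1 \<le> i0" using fS unfolding i0_def by simp
      thus False by simp
    qed
    have i0k: "i0 < k" using i0j j by simp
    define D where "D = rotate i0 C"
    have icD: "induced_cycle V E D" unfolding D_def using rot_induced[OF ic] .
    have lD: "length D = k" using kC unfolding D_def by simp
    have Dn: "\<And>t. t < k \<Longrightarrow> D ! t = C ! ((i0 + t) mod k)" unfolding D_def using kC by (simp add: nth_rotate)
    have setD: "set D = set C" unfolding D_def by simp
    have D0: "E x (D ! 0)" using Dn[of 0] i0S i0k k6 unfolding S_def by simp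
    have D1: "\<not> E x (D ! 1)" using Dn[of 1] ni1 i0j j k6 by simp
    have exm: "\<exists>m. 0 < m \<and> m < k \<and> E x (D ! m)"
    proof -
      obtain w where w: "w \<in> {?u, ?v}" "w \<noteq> D ! 0" using uv by (cases "?u = D ! 0") auto
      have "w \<in> set D" using w setD uC by auto
      then obtain t where t: "t < k" "D ! t = w" using lD by (auto simp: in_set_conv_nth)
      have "E x w" using w xu xv by auto
      thus ?thesis using t w by (intro exI[of _ t]) (auto intro: Nat.gr0I)
    qed
    define m where "m = (LEAST m. 0 < m \<and> m < k \<and> E x (D ! m))"
    have mP: "0 < m \<and> m < k \<and> E x (D ! m)" unfolding m_def using exm by (rule LeastI_ex)
    have mnone: "\<forall>i. 0 < i \<and> i < m \<longrightarrow> \<not> E x (D ! i)"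
      using not_less_Least mP unfolding m_def by (metis order.strict_trans)
    have m2: "2 \<le> m" using mP D1 by (cases "m = 1") auto
    have mk: "k - 2 \<le> m"
    proof (cases "m + 1 < k")
      case True
      have xnD: "x \<notin> set D" using xn setD by simp
      have "induced_cycle V E (x # take (m+1) D)"
        using gap_cycle[OF icD g xV xnD m2] True lD D0 mP mnone by simp
      moreover have "length (x # take (m+1) D) = m + 2" using True lD by simp
      moreover have "m + 2 > 3" using m2 by simp
      ultimately have "k \<le> m + 2" using minc by metis
      thus ?thesis by simp
    next
      case False thus ?thesis by simp
    qed
    have nb: "\<And>t. t < k \<Longrightarrow> E x (D ! t) \<Longrightarrow> t = 0 \<or> k - 2 \<le> t"
      using mnone mk by fastforce
    have kp: "0 < k" "3 < k" using k6 by auto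
    obtain pu where pu: "pu < k" "D ! pu = ?u" using setD lD uC
      by (metis in_set_conv_nth)
    obtain pv where pv: "pv < k" "D ! pv = ?v" using setD lD uC
      by (metis in_set_conv_nth)
    have "C ! ((i0 + pu) mod k) = C ! 0" using Dn[OF pu(1)] pu(2) by simp
    hence au: "(i0 + pu) mod k = 0" using idx kp by simp
    have "C ! ((i0 + pv) mod k) = C ! 3" using Dn[OF pv(1)] pv(2) by simp
    hence av: "(i0 + pv) mod k = 3" using idx kp by simp
    have bu: "pu = 0 \<or> k - 2 \<le> pu" using nb pu xu by simp
    have bv: "pv = 0 \<or> k - 2 \<le> pv" using nb pv xv by simp
    have "i0 + pu = 0 \<or> i0 + pu = k" using mod2[of "i0+pu" k] au i0k pu by simp
    moreover have "i0 + pv = 3 \<or> i0 + pv = 3 + k" using mod2[of "i0+pv" k] av i0k pv by simp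
    ultimately show False using bu bv k6 pu pv i0k by arith
  qed
  thus ?thesis using xV xn by blast
qed

end
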